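(* Let $f$ be a non-constant entire function. Then $$Z(f')=\bigcup_{\phi\in{\rm Aut}(f)-\{{\rm id}\}}\{w\in\mathbb{C}\,|\,\phi(w)=w\}=:{\rm Fix}({\rm Aut}(f)),$$ where $Z(f')$ is the zero set of $f'$.
   Context: An automorphic function of $f$ is a (generally multivalued) analytic function $\phi$, or a branch of one, satisfying $f(\phi(z))=f(z)$, i.e. a branch of $f^{-1}\circ f$; ${\rm Aut}(f)$ is the group (under composition) of all of them, with identity ${\rm id}(z)=z$. A point $w$ is a fixed point of $\phi\in{\rm Aut}(f)-\{{\rm id}\}$ if a branch of $f^{-1}\circ f$ different from the identity branch takes the value $w$ at $w$ (as its value or limit value at $w$). *)

theory Defs
  imports "HOL-Complex_Analysis.Complex_Analysis"
begin

text \<open>A branch of the (multivalued) automorphic function f^{-1} o f: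
  an analytic function phi on a nonempty open connected domain D with f (phi z) = f z on D.\<close>
definition aut_branch :: "(complex \<Rightarrow> complex) \<Rightarrow> (complex \<Rightarrow> complex) \<Rightarrow> complex set \<Rightarrow> bool" where
  "aut_branch f \<phi> D \<longleftrightarrow> open D \<and> connected D \<and> D \<noteq> {} \<and> \<phi> holomorphic_on D
     \<and> (\<forall>z\<in>D. f (\<phi> z) = f z)"

text \<open>Fix(Aut(f)): points w such that some branch different from the identity branch
  takes the value w at w, as its value or limit value (w in the closure of the domain).\<close>
definition Fix_Aut :: "(complex \<Rightarrow> complex) \<Rightarrow> complex set" where
  "Fix_Aut f = {w. \<exists>\<phi> D. aut_branch f \<phi> D \<and> (\<exists>z\<in>D. \<phi> z \<noteq> z)
       \<and> w \<in> closure D \<and> (\<phi> \<longlongrightarrow> w) (at w within D)}"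

end

theory Submission
  imports Defs
begin

lemma dir1:
  fixes f :: "complex \<Rightarrow> complex"
  assumes hol: "f holomorphic_on UNIV" and w: "w \<in> Fix_Aut f"
  shows "deriv f w = 0"
proof (rule ccontr)
  assume dnz: "deriv f w \<noteq> 0"
  obtain \<phi> D where br: "aut_branch f \<phi> D" and nid: "\<exists>z\<in>D. \<phi> z \<noteq> z"
    and cl: "w \<in> closure D" and lim: "(\<phi> \<longlongrightarrow> w) (at w within D)"
    using w unfolding Fix_Aut_def by blast
  have oD: "open D" and cD: "connected D" and hD: "\<phi> holomorphic_on D"
    and fe: "\<And>z. z \<in> D \<Longrightarrow> f (\<phi> z) = f z"
    using br unfolding aut_branch_def by auto
  obtain r where r: "r > 0" "inj_on f (ball w r)"
    using has_complex_derivative_locally_injective[OF hol _ open_UNIV dnz] by blast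
  have ev1: "eventually (\<lambda>z. \<phi> z \<in> ball w r) (at w within D)"
    using lim r(1) unfolding tendsto_def by (metis open_ball centre_in_ball)
  have ev2: "eventually (\<lambda>z. z \<in> ball w r) (at w within D)"
    using r(1) by (auto simp: eventually_at dist_commute intro!: exI[of _ r])
  have "eventually (\<lambda>z. z \<in> D \<longrightarrow> \<phi> z = z) (at w within D)"
    using eventually_conj[OF ev1 ev2]
    by eventually_elim (use r(2) fe in \<open>auto simp: inj_on_def\<close>)
  then obtain d where d: "d > 0" "\<And>z. z \<in> D \<Longrightarrow> z \<noteq> w \<Longrightarrow> dist z w < d \<Longrightarrow> \<phi> z = z"
    unfolding eventually_at by blast
  have lp: "w islimpt D"
  proof (cases "w \<in> D")
    case True then show ?thesis using oD
      by (simp add: interior_limit_point interior_open)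
  next
    case False then show ?thesis using cl by (simp add: closure_def)
  qed
  then obtain z0 where z0: "z0 \<in> D" "z0 \<noteq> w" "dist z0 w < d"
    using d(1) islimpt_approachable by blast
  let ?s = "D \<inter> ball w d - {w}"
  have os: "open ?s" using oD by (intro open_Diff open_Int) auto
  have "z0 \<in> ?s" using z0 by (auto simp: dist_commute)
  hence ne: "?s \<noteq> {}" by blast
  have "\<forall>z\<in>D. \<phi> z = z"
  proof
    fix z assume "z \<in> D"
    have sub: "?s \<subseteq> D" by blast
    have eq: "\<And>x. x \<in> ?s \<Longrightarrow> \<phi> x = x" using d by (auto simp: dist_commute)
    show "\<phi> z = z"
      using analytic_continuation_open[OF os oD ne cD sub hD holomorphic_on_ident[of D] eq \<open>z \<in> D\<close>] .
  qed
  with nid show False by blast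
qed

lemma dir2:
  fixes f :: "complex \<Rightarrow> complex"
  assumes hol: "f holomorphic_on UNIV" and nc: "\<not> (\<exists>c. \<forall>z. f z = c)"
    and d0: "deriv f w = 0"
  shows "w \<in> Fix_Aut f"
proof -
  have ex: "\<exists>n. 0 < n \<and> (deriv ^^ n) f w \<noteq> 0"
  proof (rule ccontr)
    assume "\<not> ?thesis"
    hence all: "\<And>n. 0 < n \<Longrightarrow> (deriv ^^ n) f w = 0" by blast
    have "\<And>n. (deriv ^^ n) (\<lambda>z. f z - f w) w = 0"
    proof -
      fix n
      have "(deriv ^^ n) (\<lambda>z. f z - f w) w = (deriv ^^ n) f w - (deriv ^^ n) (\<lambda>z. f w) w"
        by (rule higher_deriv_diff[OF hol holomorphic_on_const open_UNIV UNIV_I])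
      then show "(deriv ^^ n) (\<lambda>z. f z - f w) w = 0"
      proof (cases "n = 0")
        case True then show ?thesis by simp
      next
        case False
        then have "(deriv ^^ n) f w = 0" using all by simp
        then show ?thesis using \<open>(deriv ^^ n) (\<lambda>z. f z - f w) w = _\<close> False
          by (simp only: higher_deriv_const) simp
      qed
    qed
    note dz = this
    have hd: "(\<lambda>z. f z - f w) holomorphic_on UNIV" by (intro holomorphic_intros hol)
    have "\<And>z. f z - f w = 0"
      using holomorphic_fun_eq_0_on_connected[OF hd open_UNIV connected_UNIV dz UNIV_I UNIV_I] by simp
    with nc show False by auto
  qed
  define k where "k = (LEAST n. 0 < n \<and> (deriv ^^ n) f w \<noteq> 0)"
  have k: "0 < k" "(deriv ^^ k) f w \<noteq> 0"
    using LeastI_ex[OF ex] unfolding k_def by auto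
  have kl: "\<And>i. 0 < i \<Longrightarrow> i < k \<Longrightarrow> (deriv ^^ i) f w = 0"
    unfolding k_def using not_less_Least by blast
  have k2: "k \<ge> 2"
  proof (rule ccontr)
    assume "\<not> k \<ge> 2"
    with k(1) have "k = 1" by auto
    with k(2) d0 show False by simp
  qed
  have "\<exists>r g. 0 < r \<and> g holomorphic_on ball w r \<and> (\<forall>z\<in>ball w r. f z - f w = ((z - w) * g z) ^ k)
     \<and> (\<forall>z\<in>ball w r. g z \<noteq> 0)"
  proof (rule holomorphic_factor_order_of_zero_strong[OF hol open_UNIV UNIV_I k(1) k(2)])
    show "\<And>i. 0 < i \<Longrightarrow> i < k \<Longrightarrow> (deriv ^^ i) f w = 0" by (rule kl)
  next
    fix g r
    assume "0 < r" "g holomorphic_on ball w r" "\<And>z. z \<in> ball w r \<Longrightarrow> f z - f w = ((z - w) * g z) ^ k"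
      "\<And>z. z \<in> ball w r \<Longrightarrow> g z \<noteq> 0"
    then show "\<exists>r g. 0 < r \<and> g holomorphic_on ball w r \<and> (\<forall>z\<in>ball w r. f z - f w = ((z - w) * g z) ^ k)
     \<and> (\<forall>z\<in>ball w r. g z \<noteq> 0)" by blast
  qed
  then obtain r g where r: "0 < r" and hg: "g holomorphic_on ball w r"
    and fg: "\<And>z. z \<in> ball w r \<Longrightarrow> f z - f w = ((z - w) * g z) ^ k"
    and gnz: "\<And>z. z \<in> ball w r \<Longrightarrow> g z \<noteq> 0"
    by blast
  define h where "h = (\<lambda>z. (z - w) * g z)"
  have hh: "h holomorphic_on ball w r" unfolding h_def
    by (intro holomorphic_intros hg)
  have "(g has_field_derivative deriv g w) (at w)"
    using hg r by (intro holomorphic_derivI[of g "ball w r"]) auto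
  moreover have "((\<lambda>z. z - w) has_field_derivative 1) (at w)"
    by (intro derivative_eq_intros) auto
  ultimately have "(h has_field_derivative (1 * g w + deriv g w * (w - w))) (at w)"
    unfolding h_def using DERIV_mult by blast
  hence dh: "deriv h w \<noteq> 0" using gnz r by (simp add: DERIV_imp_deriv)
  obtain r1 where r1: "r1 > 0" "ball w r1 \<subseteq> ball w r" "inj_on h (ball w r1)"
    using has_complex_derivative_locally_injective[OF hh _ open_ball dh] r by auto
  define U where "U = ball w r1"
  have hU: "h holomorphic_on U" unfolding U_def using holomorphic_on_subset[OF hh r1(2)] .
  have oV: "open (h ` U)" using open_mapping_thm3[OF hU _ r1(3)[folded U_def]] U_def by simp
  obtain hi where hi: "hi holomorphic_on (h ` U)" "\<And>z. z \<in> U \<Longrightarrow> hi (h z) = z"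
  proof (rule holomorphic_has_inverse[OF hU _ r1(3)[folded U_def]])
    show "open U" by (simp add: U_def)
  next
    fix g assume "g holomorphic_on h ` U" "\<And>z. z \<in> U \<Longrightarrow> deriv h z * deriv g (h z) = 1"
      "\<And>z. z \<in> U \<Longrightarrow> g (h z) = z"
    then show thesis using that by blast
  qed
  have wU: "w \<in> U" using r1 U_def by simp
  have h0: "h w = 0" unfolding h_def by simp
  obtain e where e: "e > 0" "ball 0 e \<subseteq> h ` U"
    using oV wU h0 by (metis image_eqI open_contains_ball)
  have hhi: "\<And>v. v \<in> h ` U \<Longrightarrow> h (hi v) = v \<and> hi v \<in> U" using hi(2) by auto
  define D where "D = U \<inter> h -` ball 0 e"
  have oD: "open D" unfolding D_def U_def
    using continuous_open_preimage[OF holomorphic_on_imp_continuous_on[OF hU[unfolded U_def]]]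
    by auto
  have Deq: "D = hi ` ball 0 e"
  proof
    show "D \<subseteq> hi ` ball 0 e" unfolding D_def using hi(2) by (auto intro!: image_eqI)
    show "hi ` ball 0 e \<subseteq> D" unfolding D_def using hhi e(2) by auto
  qed
  have cD: "connected D" unfolding Deq
    by (intro connected_continuous_image connected_ball holomorphic_on_imp_continuous_on
          holomorphic_on_subset[OF hi(1) e(2)])
  have wD: "w \<in> D" unfolding D_def using wU h0 e by simp
  define \<zeta> :: complex where "\<zeta> = exp(2 * of_real pi * \<i> * of_nat 1 / of_nat k)"
  have zk: "\<zeta> ^ k = 1" unfolding \<zeta>_def using complex_root_unity k(1) by blast
  have z1: "\<zeta> \<noteq> 1" unfolding \<zeta>_def using complex_root_unity_eq_1[of k 1] k2 by auto
  have nz: "norm \<zeta> = 1" unfolding \<zeta>_def by (simp add: norm_exp_eq_Re)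
  define \<phi> where "\<phi> = (\<lambda>z. hi (\<zeta> * h z))"
  have inb: "\<And>z. z \<in> D \<Longrightarrow> \<zeta> * h z \<in> ball 0 e"
    unfolding D_def using nz by (auto simp: norm_mult)
  have hphi: "\<phi> holomorphic_on D"
  proof -
    have "(hi \<circ> (\<lambda>z. \<zeta> * h z)) holomorphic_on D"
      by (rule holomorphic_on_compose_gen[where t="ball 0 e"])
         (use hU inb holomorphic_on_subset[OF hi(1) e(2)] in \<open>auto simp: D_def intro!: holomorphic_intros holomorphic_on_subset[OF hU]\<close>)
    thus ?thesis by (simp add: \<phi>_def o_def)
  qed
  have DU: "D \<subseteq> U" unfolding D_def by auto
  have Ur: "U \<subseteq> ball w r" using r1 U_def by simp
  have feq: "\<forall>z\<in>D. f (\<phi> z) = f z"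
  proof
    fix z assume z: "z \<in> D"
    have v: "\<zeta> * h z \<in> h ` U" using inb[OF z] e(2) by auto
    have "f (\<phi> z) - f w = (h (\<phi> z)) ^ k"
      using fg hhi[OF v] Ur unfolding \<phi>_def h_def by auto
    also have "\<dots> = (\<zeta> * h z) ^ k" using hhi[OF v] unfolding \<phi>_def by simp
    also have "\<dots> = h z ^ k" using zk by (simp add: power_mult_distrib)
    also have "\<dots> = f z - f w" using fg z DU Ur unfolding h_def by auto
    finally show "f (\<phi> z) = f z" by simp
  qed
  have nid: "\<exists>z\<in>D. \<phi> z \<noteq> z"
  proof -
    define v :: complex where "v = of_real (e/2)"
    have vb: "v \<in> ball 0 e" using e(1) by (simp add: v_def)
    have vnz: "v \<noteq> 0" using e(1) by (simp add: v_def)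
    have vU: "v \<in> h ` U" using vb e(2) by auto
    have zvb: "\<zeta> * v \<in> h ` U" using vb e(2) nz by (auto simp: norm_mult)
    let ?z = "hi v"
    have zD: "?z \<in> D" using Deq vb by auto
    have "\<phi> ?z \<noteq> ?z"
    proof
      assume "\<phi> ?z = ?z"
      hence "h (\<phi> ?z) = h ?z" by simp
      hence "\<zeta> * v = v" using hhi[OF vU] hhi[OF zvb] unfolding \<phi>_def by simp
      with vnz z1 show False by simp
    qed
    with zD show ?thesis by blast
  qed
  have pw: "\<phi> w = w" unfolding \<phi>_def using h0 hi(2)[OF wU] by simp
  have lim: "(\<phi> \<longlongrightarrow> w) (at w within D)"
    using holomorphic_on_imp_continuous_on[OF hphi] wD pw
    by (metis continuous_on_def)
  show ?thesis unfolding Fix_Aut_def aut_branch_def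
    using oD cD wD hphi feq nid lim closure_subset by blast
qed

theorem theorem4:
  fixes f :: "complex \<Rightarrow> complex"
  assumes "f holomorphic_on UNIV"
    and "\<not> (\<exists>c. \<forall>z. f z = c)"
  shows "{w. deriv f w = 0} = Fix_Aut f"
  using dir1[OF assms(1)] dir2[OF assms] by blast

end
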